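(* Let $n\in\mathbb{N}$, $\alpha\in(0,1)$, $p\in\left(\frac{1}{1-\alpha},+\infty\right]$, and let $q\in[1,+\infty)$ with $\frac1p+\frac1q=1$. Let $A_{n,\alpha,p}>0$ be a constant depending only on $n,\alpha,p$ such that for every $g\in BV^{\alpha,p}(\mathbb{R}^n)$ and $|D^\alpha g|$-a.e. $x\in\mathbb{R}^n$ there is $r_x>0$ with $|D^\alpha g|(B_r(x))\le A_{n,\alpha,p}\|g\|_{L^p(\mathbb{R}^n)}r^{\frac nq-\alpha}$ for all $r\in(0,r_x)$ (such a constant exists). If $f\in BV^{\alpha,p}(\mathbb{R}^n)$, then there exists a $|D^\alpha f|$-negligible set $Z^{\alpha,p}_f\subset\mathbb{R}^n$ such that $$|D^\alpha f|\le 2^{\frac nq-\alpha}\,\frac{A_{n,\alpha,p}}{\omega_{\frac nq-\alpha}}\,\|f\|_{L^p(\mathbb{R}^n)}\,\mathcal{H}^{\frac nq-\alpha}\llcorner(\mathbb{R}^n\setminus Z^{\alpha,p}_f).$$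
   Context: $\omega_\beta=\pi^{\beta/2}/\Gamma\left(\frac{\beta+2}{2}\right)$ for $\beta>0$; $\mathcal{H}^s$ is the $s$-dimensional Hausdorff measure and $\mu\llcorner E$ the restriction of a measure to $E$. Let $\mu_{n,\alpha}=2^{\alpha}\pi^{-n/2}\Gamma\left(\frac{n+\alpha+1}{2}\right)/\Gamma\left(\frac{1-\alpha}{2}\right)$ and $\operatorname{div}^\alpha\varphi(x)=\mu_{n,\alpha}\int\frac{(y-x)\cdot(\varphi(y)-\varphi(x))}{|y-x|^{n+\alpha+1}}dy$ for $\varphi\in C^\infty_c(\mathbb{R}^n;\mathbb{R}^n)$. $BV^{\alpha,p}(\mathbb{R}^n)$ is the set of $f\in L^p(\mathbb{R}^n)$ with $|D^\alpha f|(\mathbb{R}^n):=\sup\{\int f\operatorname{div}^\alpha\varphi\,dx:\varphi\in C^\infty_c(\mathbb{R}^n;\mathbb{R}^n),\ \|\varphi\|_{L^\infty}\le1\}<\infty$; $D^\alpha f$ is the unique finite $\mathbb{R}^n$-valued Radon measure with $\int f\operatorname{div}^\alpha\varphi=-\int\varphi\cdot dD^\alpha f$, and $|D^\alpha f|$ its total variation measure. *)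

theory Defs
  imports "HOL-Analysis.Analysis"
begin

definition omega :: "real \<Rightarrow> real" where
  "omega \<beta> = pi powr (\<beta> / 2) / Gamma ((\<beta> + 2) / 2)"

definition mu_const :: "nat \<Rightarrow> real \<Rightarrow> real" where
  "mu_const n \<alpha> = 2 powr \<alpha> * pi powr (- real n / 2) * Gamma ((real n + \<alpha> + 1) / 2)
                    / Gamma ((1 - \<alpha>) / 2)"

definition dirderiv :: "'a::euclidean_space \<Rightarrow> ('a \<Rightarrow> 'b::real_normed_vector) \<Rightarrow> 'a \<Rightarrow> 'b" where
  "dirderiv v g x = vector_derivative (\<lambda>t. g (x + t *\<^sub>R v)) (at 0)"

fun iter_dd :: "'a::euclidean_space list \<Rightarrow> ('a \<Rightarrow> 'b::real_normed_vector) \<Rightarrow> 'a \<Rightarrow> 'b" where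
  "iter_dd [] g = g"
| "iter_dd (v # vs) g = dirderiv v (iter_dd vs g)"

definition smooth_fun :: "('a::euclidean_space \<Rightarrow> 'b::real_normed_vector) \<Rightarrow> bool" where
  "smooth_fun g \<longleftrightarrow> (\<forall>vs. set vs \<subseteq> Basis \<longrightarrow>
      continuous_on UNIV (iter_dd vs g) \<and>
      (\<forall>v\<in>Basis. \<forall>x. (\<lambda>t. iter_dd vs g (x + t *\<^sub>R v)) differentiable (at 0)))"

definition test_field :: "('a::euclidean_space \<Rightarrow> 'a) \<Rightarrow> bool" where
  "test_field \<phi> \<longleftrightarrow> smooth_fun \<phi> \<and> compact (closure {x. \<phi> x \<noteq> 0})"

definition frac_div :: "real \<Rightarrow> ('a::euclidean_space \<Rightarrow> 'a) \<Rightarrow> 'a \<Rightarrow> real" where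
  "frac_div \<alpha> \<phi> x = mu_const DIM('a) \<alpha> *
     (\<integral>y. ((y - x) \<bullet> (\<phi> y - \<phi> x)) / norm (y - x) powr (real DIM('a) + \<alpha> + 1) \<partial>lebesgue)"

definition memLp :: "ereal \<Rightarrow> ('a::euclidean_space \<Rightarrow> real) \<Rightarrow> bool" where
  "memLp p f \<longleftrightarrow> f \<in> borel_measurable lebesgue \<and>
     (if p = \<infinity> then (\<exists>C. AE x in lebesgue. \<bar>f x\<bar> \<le> C)
      else integrable lebesgue (\<lambda>x. \<bar>f x\<bar> powr real_of_ereal p))"

definition Lp_norm :: "ereal \<Rightarrow> ('a::euclidean_space \<Rightarrow> real) \<Rightarrow> real" where
  "Lp_norm p f = (if p = \<infinity> then Inf {C. 0 \<le> C \<and> (AE x in lebesgue. \<bar>f x\<bar> \<le> C)}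
      else (\<integral>x. \<bar>f x\<bar> powr real_of_ereal p \<partial>lebesgue) powr (1 / real_of_ereal p))"

definition BV_frac :: "real \<Rightarrow> ereal \<Rightarrow> ('a::euclidean_space \<Rightarrow> real) \<Rightarrow> bool" where
  "BV_frac \<alpha> p f \<longleftrightarrow> memLp p f \<and>
     bdd_above {(\<integral>x. f x * frac_div \<alpha> \<phi> x \<partial>lebesgue) | \<phi>.
                  test_field \<phi> \<and> (\<forall>x. norm (\<phi> x) \<le> 1)}"

text \<open>mu is the total variation measure |D^alpha f| of the vector measure D^alpha f,
  represented through its polar decomposition D^alpha f = nu mu with |nu| = 1 mu-a.e.:
  mu is a finite Borel measure on R^n (hence Radon) and
  int f div^alpha phi = - int phi . d(D^alpha f) for all test fields phi.\<close>
definition is_frac_variation ::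
    "real \<Rightarrow> ('a::euclidean_space \<Rightarrow> real) \<Rightarrow> 'a measure \<Rightarrow> ('a \<Rightarrow> 'a) \<Rightarrow> bool" where
  "is_frac_variation \<alpha> f \<mu> \<nu> \<longleftrightarrow>
     sets \<mu> = sets borel \<and> finite_measure \<mu> \<and> \<nu> \<in> borel_measurable borel \<and>
     (AE x in \<mu>. norm (\<nu> x) = 1) \<and>
     (\<forall>\<phi>. test_field \<phi> \<longrightarrow>
        (\<integral>x. f x * frac_div \<alpha> \<phi> x \<partial>lebesgue) = - (\<integral>x. \<phi> x \<bullet> \<nu> x \<partial>\<mu>))"

definition hausdorff_pre :: "real \<Rightarrow> real \<Rightarrow> 'a::euclidean_space set \<Rightarrow> ennreal" where
  "hausdorff_pre s \<delta> E = (INF C \<in> {C :: nat \<Rightarrow> 'a set. E \<subseteq> (\<Union>i. C i) \<and>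
        (\<forall>i. bounded (C i) \<and> diameter (C i) \<le> \<delta>)}.
      (\<Sum>i. ennreal (omega s * (diameter (C i) / 2) powr s)))"

definition hausdorff :: "real \<Rightarrow> 'a::euclidean_space set \<Rightarrow> ennreal" where
  "hausdorff s E = (SUP \<delta> \<in> {0<..}. hausdorff_pre s \<delta> E)"

end

theory Submission
  imports Defs
begin

lemma le_mult_Inf_ennreal:
  fixes z c :: ennreal
  assumes "X \<noteq> {}" "c \<noteq> top" "\<And>S. S \<in> X \<Longrightarrow> z \<le> c * S"
  shows "z \<le> c * Inf X"
proof (cases "c = 0")
  case True
  then show ?thesis using assms by auto
next
  case False
  then have cpos: "c > 0" by (simp add: zero_less_iff_neq_zero)
  have "z / c \<le> Inf X"
    by (rule Inf_greatest) (use assms cpos in \<open>auto intro: divide_le_posI_ennreal\<close>)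
  then have "c * (z / c) \<le> c * Inf X" by (rule mult_left_mono) simp
  moreover have "c * (z / c) = z"
    using False assms(2) by (metis ennreal_mult_divide_eq mult.commute ennreal_times_divide)
  ultimately show ?thesis by simp
qed

lemma cover_exists:
  fixes \<delta> :: real assumes "0 < \<delta>"
  shows "\<exists>C::nat \<Rightarrow> 'a::euclidean_space set. (UNIV \<subseteq> (\<Union>i. C i)) \<and> (\<forall>i. bounded (C i) \<and> diameter (C i) \<le> \<delta>)"
proof -
  obtain D :: "'a set" where "countable D" and D: "\<And>X. open X \<Longrightarrow> X \<noteq> {} \<Longrightarrow> \<exists>d\<in>D. d \<in> X"
    by (erule countable_dense_setE)
  define e where "e = from_nat_into D"
  have "\<exists>i. x \<in> cball (e i) (\<delta>/2)" for x
  proof -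
    obtain d where "d \<in> D" and d: "d \<in> ball x (\<delta>/2)"
      using D[of "ball x (\<delta>/2)"] assms by auto
    from \<open>d \<in> D\<close> D[of UNIV] \<open>countable D\<close> obtain i where "d = e i"
      unfolding e_def by (auto dest: from_nat_into_surj)
    with d have "x \<in> cball (e i) (\<delta>/2)" by (auto simp: dist_commute)
    then show ?thesis by blast
  qed
  then show ?thesis using assms
    by (intro exI[of _ "\<lambda>i. cball (e i) (\<delta>/2)"]) auto
qed

lemma closed_F:
  fixes \<mu> :: "'a::euclidean_space measure"
  assumes sets: "sets \<mu> = sets borel"
  shows "closed {x. \<forall>r. 0<r \<and> r<R \<longrightarrow> emeasure \<mu> (ball x r) \<le> g r}"
proof -
  let ?F = "{x. \<forall>r. 0<r \<and> r<R \<longrightarrow> emeasure \<mu> (ball x r) \<le> g r}"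
  have "open (- ?F)"
    unfolding open_dist
  proof (intro ballI)
    fix x assume "x \<in> - ?F"
    then obtain r where r: "0<r" "r<R" "\<not> emeasure \<mu> (ball x r) \<le> g r" by blast
    then have r3: "g r < emeasure \<mu> (ball x r)" by (simp add: not_le)
    define A where "A n = ball x (r - r/(real n + 2))" for n::nat
    have "A n \<in> sets borel" for n unfolding A_def by simp
    then have Ain: "range A \<subseteq> sets \<mu>" using sets by blast
    have inc: "incseq A" unfolding incseq_def A_def
    proof (intro allI impI subset_ball)
      fix m n :: nat assume "m \<le> n"
      then have "r/(real n + 2) \<le> r/(real m + 2)" using r by (intro divide_left_mono) auto
      then show "r - r / (real m + 2) \<le> r - r / (real n + 2)" by simp
    qed
    have U: "(\<Union>n. A n) = ball x r"
    proof
      show "(\<Union>n. A n) \<subseteq> ball x r" unfolding A_def using r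
        by (intro UN_least subset_ball) auto
    next
      show "ball x r \<subseteq> (\<Union>n. A n)"
      proof
        fix z assume z: "z \<in> ball x r"
        then have dz: "dist x z < r" by simp
        obtain n :: nat where n: "r / (r - dist x z) < real n" using reals_Archimedean2 by blast
        have pos: "0 < r - dist x z" using dz by simp
        have "r < real n * (r - dist x z)" using n pos by (simp add: pos_divide_less_eq)
        moreover have "real n * (r - dist x z) \<le> (real n + 2) * (r - dist x z)"
          using pos by (intro mult_right_mono) auto
        ultimately have "r < (real n + 2) * (r - dist x z)" by (rule less_le_trans)
        then have "r / (real n + 2) < r - dist x z" by (simp add: pos_divide_less_eq mult.commute)
        then have "z \<in> A n" unfolding A_def by simp
        then show "z \<in> (\<Union>n. A n)" by blast
      qed
    qed
    have "(SUP n. emeasure \<mu> (A n)) = emeasure \<mu> (ball x r)"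
      using SUP_emeasure_incseq[OF Ain inc] U by simp
    with r3 obtain n where n: "g r < emeasure \<mu> (A n)" by (metis less_SUP_iff)
    show "\<exists>e>0. \<forall>y. dist y x < e \<longrightarrow> y \<in> - ?F"
    proof (intro exI[of _ "r/(real n + 2)"] conjI allI impI)
      show "0 < r/(real n + 2)" using r by simp
      fix y assume y: "dist y x < r/(real n + 2)"
      have "A n \<subseteq> ball y r"
      proof
        fix z assume "z \<in> A n"
        then have "dist x z < r - r/(real n + 2)" by (simp add: A_def)
        then show "z \<in> ball y r" using y dist_triangle[of y z x] by simp
      qed
      moreover have bs: "ball y r \<in> sets \<mu>" unfolding sets by (rule borel_open) simp
      ultimately have "emeasure \<mu> (A n) \<le> emeasure \<mu> (ball y r)"
        by (rule emeasure_mono)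
      then have "\<not> emeasure \<mu> (ball y r) \<le> g r" using n by (meson leD order.strict_trans2)
      then have "y \<notin> ?F" using r(1,2) by blast
      then show "y \<in> - ?F" by simp
    qed
  qed
  then show ?thesis by (simp add: closed_def)
qed

lemma choose_r:
  fixes d R \<eta> s K :: real
  assumes "0 \<le> d" "d < R" "0 < \<eta>" "0 < s" "0 \<le> K"
  shows "\<exists>r. d < r \<and> r < R \<and> K * r powr s \<le> K * d powr s + \<eta>"
proof -
  have "((\<lambda>t. K * t powr s) \<longlongrightarrow> K * d powr s) (at_right d)"
    using assms by (intro tendsto_intros) (auto simp: eventually_at_right_field intro: exI[of _ "d+1"])
  then have "eventually (\<lambda>t. dist (K * t powr s) (K * d powr s) < \<eta>) (at_right d)"
    using assms(3) tendstoD by blast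
  moreover have "eventually (\<lambda>t. t < R) (at_right d)"
    using assms(2) eventually_at_right_field by blast
  moreover have "eventually (\<lambda>t. d < t) (at_right d)"
    by (simp add: eventually_at_right_field) (auto intro: exI[of _ "d+1"])
  ultimately have "eventually (\<lambda>t. dist (K * t powr s) (K * d powr s) < \<eta> \<and> t < R \<and> d < t) (at_right d)"
    by eventually_elim auto
  then obtain t where "dist (K * t powr s) (K * d powr s) < \<eta> \<and> t < R \<and> d < t"
    using eventually_happens trivial_limit_at_right_real by blast
  then show ?thesis by (intro exI[of _ t]) (auto simp: dist_real_def)
qed


lemma cover_bound:
  fixes \<mu> :: "'a::euclidean_space measure"
  assumes sets: "sets \<mu> = sets borel" and s: "0<s" and K: "0 \<le> K" and R: "\<delta> < R"
    and E: "\<And>x r. x \<in> E \<Longrightarrow> 0<r \<Longrightarrow> r<R \<Longrightarrow> emeasure \<mu> (ball x r) \<le> ennreal (K * r powr s)"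
    and C: "E \<subseteq> (\<Union>i. C i)" "\<And>i. bounded (C i)" "\<And>i. diameter (C i) \<le> \<delta>"
  shows "emeasure \<mu> E \<le> (\<Sum>i. ennreal (K * diameter (C i) powr s))"
proof (rule ennreal_le_epsilon)
  fix e :: real assume e: "0 < e"
  define d where "d i = diameter (C i)" for i
  have d0: "0 \<le> d i" for i unfolding d_def by (simp add: diameter_ge_0 C(2))
  have "\<forall>i. \<exists>x r. (C i \<inter> E = {} \<longrightarrow> r = 0) \<and> (C i \<inter> E \<noteq> {} \<longrightarrow> x \<in> C i \<inter> E \<and> d i < r \<and> r < R
          \<and> K * r powr s \<le> K * d i powr s + e / 2 ^ Suc i)"
  proof
    fix i
    show "\<exists>x r. (C i \<inter> E = {} \<longrightarrow> r = 0) \<and> (C i \<inter> E \<noteq> {} \<longrightarrow> x \<in> C i \<inter> E \<and> d i < r \<and> r < R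
          \<and> K * r powr s \<le> K * d i powr s + e / 2 ^ Suc i)"
    proof (cases "C i \<inter> E = {}")
      case True then show ?thesis by auto
    next
      case False
      then obtain x where x: "x \<in> C i \<inter> E" by blast
      have "d i < R" using C(3)[of i] R unfolding d_def by simp
      then obtain r where "d i < r \<and> r < R \<and> K * r powr s \<le> K * d i powr s + e / 2 ^ Suc i"
        using choose_r[of "d i" R "e / 2 ^ Suc i" s K] d0 e s K by auto
      then show ?thesis using x False by blast
    qed
  qed
  then obtain x r where xr: "\<And>i. (C i \<inter> E = {} \<longrightarrow> r i = 0) \<and> (C i \<inter> E \<noteq> {} \<longrightarrow> x i \<in> C i \<inter> E \<and> d i < r i \<and> r i < R
          \<and> K * r i powr s \<le> K * d i powr s + e / 2 ^ Suc i)" by metis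
  have sub: "E \<subseteq> (\<Union>i. ball (x i) (r i))"
  proof
    fix y assume y: "y \<in> E"
    then obtain i where i: "y \<in> C i" using C(1) by blast
    then have ne: "C i \<inter> E \<noteq> {}" using y by blast
    then have "x i \<in> C i" "d i < r i" using xr[of i] by auto
    then have "dist (x i) y < r i" using diameter_bounded_bound[OF C(2) \<open>x i \<in> C i\<close> i] unfolding d_def by simp
    then show "y \<in> (\<Union>i. ball (x i) (r i))" by auto
  qed
  have "emeasure \<mu> E \<le> emeasure \<mu> (\<Union>i. ball (x i) (r i))"
    using sub by (intro emeasure_mono) (auto simp: sets)
  also have "\<dots> \<le> (\<Sum>i. emeasure \<mu> (ball (x i) (r i)))"
    by (intro emeasure_subadditive_countably) (auto simp: sets)
  also have "\<dots> \<le> (\<Sum>i. ennreal (K * d i powr s) + ennreal (e / 2 ^ Suc i))"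
  proof (intro suminf_le summableI)
    fix i
    show "emeasure \<mu> (ball (x i) (r i)) \<le> ennreal (K * d i powr s) + ennreal (e / 2 ^ Suc i)"
    proof (cases "C i \<inter> E = {}")
      case True then show ?thesis using xr[of i] by simp
    next
      case False
      then have h: "x i \<in> E" "0 < r i" "r i < R" "K * r i powr s \<le> K * d i powr s + e / 2 ^ Suc i"
        using xr[of i] d0[of i] by auto
      have "emeasure \<mu> (ball (x i) (r i)) \<le> ennreal (K * r i powr s)" using E h by blast
      also have "\<dots> \<le> ennreal (K * d i powr s + e / 2 ^ Suc i)" using h(4) by (rule ennreal_leI)
      also have "\<dots> = ennreal (K * d i powr s) + ennreal (e / 2 ^ Suc i)"
        using K e by (intro ennreal_plus) auto
      finally show ?thesis .
    qed
  qed
  also have "\<dots> = (\<Sum>i. ennreal (K * d i powr s)) + (\<Sum>i. ennreal (e / 2 ^ Suc i))"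
    by (intro suminf_add[symmetric] summableI)
  also have "(\<Sum>i. ennreal (e / 2 ^ Suc i)) = ennreal e"
  proof -
    have "(\<lambda>i. e * (1/2) ^ Suc i) sums (e * 1)"
      by (intro sums_mult power_half_series)
    then have sm: "(\<lambda>i. e / 2 ^ Suc i) sums e" by (simp add: power_divide)
    have "(\<Sum>i. ennreal (e / 2 ^ Suc i)) = ennreal (\<Sum>i. e / 2 ^ Suc i)"
      using e sm by (intro suminf_ennreal2) (auto simp: sums_iff)
    also have "\<dots> = ennreal e" using sm by (simp add: sums_iff)
    finally show ?thesis .
  qed
  finally show "emeasure \<mu> E \<le> (\<Sum>i. ennreal (K * diameter (C i) powr s)) + ennreal e"
    unfolding d_def .
qed


lemma omega_pos: "0 < s \<Longrightarrow> 0 < omega s"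
  unfolding omega_def by (intro divide_pos_pos Gamma_real_pos) auto

lemma density_bound:
  fixes \<mu> :: "'a::euclidean_space measure"
  assumes sets: "sets \<mu> = sets borel" and s: "0<s" and K: "0\<le>K" and B: "B \<in> sets borel"
    and N: "N \<in> null_sets \<mu>"
    and H: "\<And>x. x \<in> B - N \<Longrightarrow> \<exists>rx>0. \<forall>r. 0<r \<and> r<rx \<longrightarrow> emeasure \<mu> (ball x r) \<le> ennreal (K * r powr s)"
  shows "emeasure \<mu> B \<le> ennreal (2 powr s * K / omega s) * hausdorff s (B - N)"
proof -
  define c where "c = 2 powr s * K / omega s"
  have om: "0 < omega s" using omega_pos s by blast
  have c0: "0 \<le> c" unfolding c_def using K om by simp
  define F where "F k = {x. \<forall>r. 0<r \<and> r < 1/Suc k \<longrightarrow> emeasure \<mu> (ball x r) \<le> ennreal (K * r powr s)}" for k :: nat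
  have Fb: "F k \<in> sets borel" for k
    unfolding F_def by (intro borel_closed closed_F sets)
  define E where "E k = (B - N) \<inter> F k" for k
  have Nb: "N \<in> sets borel" using N sets by (auto simp: null_sets_def)
  have Es: "range E \<subseteq> sets \<mu>" unfolding E_def using Fb B Nb sets by auto
  have inc: "incseq E"
  proof (rule incseq_SucI)
    fix k
    have "F k \<subseteq> F (Suc k)" unfolding F_def
    proof (safe)
      fix x r assume h: "\<forall>r. 0 < r \<and> r < 1 / real (Suc k) \<longrightarrow> emeasure \<mu> (ball x r) \<le> ennreal (K * r powr s)"
        "0 < r" "r < 1 / real (Suc (Suc k))"
      have "1 / real (Suc (Suc k)) \<le> 1 / real (Suc k)" by (intro divide_left_mono) auto
      then show "emeasure \<mu> (ball x r) \<le> ennreal (K * r powr s)" using h by auto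
    qed
    then show "E k \<subseteq> E (Suc k)" unfolding E_def by auto
  qed
  have U: "(\<Union>k. E k) = B - N"
  proof
    show "(\<Union>k. E k) \<subseteq> B - N" unfolding E_def by auto
  next
    show "B - N \<subseteq> (\<Union>k. E k)"
    proof
      fix x assume x: "x \<in> B - N"
      then obtain rx where rx: "rx > 0" "\<forall>r. 0<r \<and> r<rx \<longrightarrow> emeasure \<mu> (ball x r) \<le> ennreal (K * r powr s)"
        using H by blast
      obtain k where k: "inverse (real (Suc k)) < rx" using reals_Archimedean[OF rx(1)] by blast
      have "x \<in> F k" unfolding F_def
      proof (intro CollectI allI impI)
        fix r assume r: "0 < r \<and> r < 1 / real (Suc k)"
        then have "r < rx" using k by (simp add: inverse_eq_divide)
        then show "emeasure \<mu> (ball x r) \<le> ennreal (K * r powr s)" using rx r by auto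
      qed
      then show "x \<in> (\<Union>k. E k)" using x unfolding E_def by blast
    qed
  qed
  have Ek: "emeasure \<mu> (E k) \<le> ennreal c * hausdorff s (B - N)" for k
  proof -
    define \<delta> where "\<delta> = 1 / (2 * real (Suc k))"
    have \<delta>: "0 < \<delta>" "\<delta> < 1 / real (Suc k)" unfolding \<delta>_def by (auto simp: field_simps)
    let ?Cov = "{C :: nat \<Rightarrow> 'a set. B - N \<subseteq> (\<Union>i. C i) \<and> (\<forall>i. bounded (C i) \<and> diameter (C i) \<le> \<delta>)}"
    let ?S = "\<lambda>C::nat \<Rightarrow> 'a set. (\<Sum>i. ennreal (omega s * (diameter (C i) / 2) powr s))"
    have "emeasure \<mu> (E k) \<le> ennreal c * Inf (?S ` ?Cov)"
    proof (rule le_mult_Inf_ennreal)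
      obtain C :: "nat \<Rightarrow> 'a set" where "UNIV \<subseteq> (\<Union>i. C i)" "\<forall>i. bounded (C i) \<and> diameter (C i) \<le> \<delta>"
        using cover_exists[OF \<delta>(1)] by blast
      then have "C \<in> ?Cov" by auto
      then show "?S ` ?Cov \<noteq> {}" by blast
      show "ennreal c \<noteq> top" by simp
      fix S assume "S \<in> ?S ` ?Cov"
      then obtain C where C: "C \<in> ?Cov" and SC: "S = ?S C" by blast
      have "emeasure \<mu> (E k) \<le> (\<Sum>i. ennreal (K * diameter (C i) powr s))"
      proof (rule cover_bound[OF sets s K \<delta>(2)])
        fix x r assume "x \<in> E k" "0 < r" "r < 1 / real (Suc k)"
        then show "emeasure \<mu> (ball x r) \<le> ennreal (K * r powr s)"
          unfolding E_def F_def by auto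
      next
        show "E k \<subseteq> (\<Union>i. C i)" using C unfolding E_def by auto
      qed (use C in auto)
      also have "\<dots> = (\<Sum>i. ennreal c * ennreal (omega s * (diameter (C i) / 2) powr s))"
      proof (intro suminf_cong)
        fix i
        have d0: "0 \<le> diameter (C i)" using C by (auto intro: diameter_ge_0)
        have "c * (omega s * (diameter (C i) / 2) powr s) = K * diameter (C i) powr s"
          unfolding c_def using om d0 by (simp add: powr_divide field_simps)
        then show "ennreal (K * diameter (C i) powr s) = ennreal c * ennreal (omega s * (diameter (C i) / 2) powr s)"
          using c0 om by (simp add: ennreal_mult[symmetric])
      qed
      also have "\<dots> = ennreal c * S" unfolding SC by simp
      finally show "emeasure \<mu> (E k) \<le> ennreal c * S" .
    qed
    also have "Inf (?S ` ?Cov) = hausdorff_pre s \<delta> (B - N)" unfolding hausdorff_pre_def by simp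
    also have "hausdorff_pre s \<delta> (B - N) \<le> hausdorff s (B - N)"
      unfolding hausdorff_def using \<delta>(1) by (intro SUP_upper) auto
    finally show ?thesis by (simp add: mult_left_mono)
  qed
  have "emeasure \<mu> B = emeasure \<mu> (B - N)"
    using B sets N by (simp add: emeasure_Diff_null_set)
  also have "\<dots> = (SUP k. emeasure \<mu> (E k))" using SUP_emeasure_incseq[OF Es inc] U by simp
  also have "\<dots> \<le> ennreal c * hausdorff s (B - N)" by (intro SUP_least Ek)
  finally show ?thesis unfolding c_def .
qed


lemma Lp_norm_nonneg:
  assumes "memLp p (f :: 'a::euclidean_space \<Rightarrow> real)"
  shows "0 \<le> Lp_norm p f"
proof (cases "p = \<infinity>")
  case True
  with assms obtain C where C: "AE x in lebesgue. \<bar>f x\<bar> \<le> C" unfolding memLp_def by auto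
  let ?S = "{C. 0 \<le> C \<and> (AE x in lebesgue. \<bar>f x\<bar> \<le> C)}"
  have "max C 0 \<in> ?S" using C by (auto elim: AE_mp)
  then have ne: "?S \<noteq> {}" by blast
  have "0 \<le> Inf ?S" by (rule cInf_greatest[OF ne]) auto
  then show ?thesis using True unfolding Lp_norm_def by simp
next
  case False
  then show ?thesis unfolding Lp_norm_def by simp
qed

theorem corollary4p4:
  fixes \<alpha> q A :: real and p :: ereal and f :: "'a::euclidean_space \<Rightarrow> real"
    and \<mu> :: "'a measure" and \<nu> :: "'a \<Rightarrow> 'a"
  assumes alpha: "0 < \<alpha>" "\<alpha> < 1"
    and p: "ereal (1 / (1 - \<alpha>)) < p"
    and q: "1 \<le> q" "inverse p + ereal (1 / q) = 1"
    and A_pos: "0 < A"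
    and A: "\<And>(g :: 'a \<Rightarrow> real) \<mu>g \<nu>g. BV_frac \<alpha> p g \<Longrightarrow> is_frac_variation \<alpha> g \<mu>g \<nu>g \<Longrightarrow>
              AE x in \<mu>g. \<exists>rx>0. \<forall>r. 0 < r \<and> r < rx \<longrightarrow>
                emeasure \<mu>g (ball x r)
                  \<le> ennreal (A * Lp_norm p g * r powr (real DIM('a) / q - \<alpha>))"
    and f: "BV_frac \<alpha> p f"
    and Df: "is_frac_variation \<alpha> f \<mu> \<nu>"
  shows "\<exists>Z. (\<exists>N \<in> null_sets \<mu>. Z \<subseteq> N) \<and>
           (\<forall>B \<in> sets borel. emeasure \<mu> B \<le>
              ennreal (2 powr (real DIM('a) / q - \<alpha>) * A / omega (real DIM('a) / q - \<alpha>)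
                       * Lp_norm p f)
              * hausdorff (real DIM('a) / q - \<alpha>) (B - Z))"
proof -
  define s where "s = real DIM('a) / q - \<alpha>"
  define L where "L = Lp_norm p f"
  have sets: "sets \<mu> = sets borel" using Df unfolding is_frac_variation_def by auto
  have sp: "space \<mu> = UNIV" using sets_eq_imp_space_eq[OF sets] by simp
  have L0: "0 \<le> L" unfolding L_def using f unfolding BV_frac_def by (intro Lp_norm_nonneg) auto
  have K0: "0 \<le> A * L" using A_pos L0 by simp
  have n1: "1 \<le> real DIM('a)" using DIM_positive[where 'a='a] by linarith
  have pa: "0 < 1 / (1 - \<alpha>)" using alpha by simp
  have s0: "0 < s"
  proof (cases p)
    case (real p0)
    then have p0: "1 / (1 - \<alpha>) < p0" using p by simp
    then have p0pos: "0 < p0" using pa by linarith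
    then have "inverse p = ereal (1 / p0)" using real by (simp add: inverse_eq_divide)
    then have e: "1 / p0 + 1 / q = 1" using q(2) by simp
    have "1 / p0 < 1 - \<alpha>" using p0 pa alpha p0pos by (simp add: field_simps)
    then have "\<alpha> < 1 / q" using e by linarith
    moreover have "1 / q \<le> real DIM('a) / q" using n1 q(1) by (intro divide_right_mono) auto
    ultimately show ?thesis unfolding s_def by linarith
  next
    case PInf
    then have "1 / q = 1" using q(2) by simp
    then have "q = 1" using q(1) by (simp add: field_simps)
    then have "real DIM('a) / q = real DIM('a)" by simp
    then show ?thesis unfolding s_def using n1 alpha by linarith
  next
    case MInf
    then show ?thesis using p by simp
  qed
  have AE: "AE x in \<mu>. \<exists>rx>0. \<forall>r. 0 < r \<and> r < rx \<longrightarrow>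
                emeasure \<mu> (ball x r) \<le> ennreal (A * L * r powr s)"
    using A[OF f Df] unfolding L_def s_def .
  then obtain N where N: "{x \<in> space \<mu>. \<not> (\<exists>rx>0. \<forall>r. 0 < r \<and> r < rx \<longrightarrow>
                emeasure \<mu> (ball x r) \<le> ennreal (A * L * r powr s))} \<subseteq> N"
    "emeasure \<mu> N = 0" "N \<in> sets \<mu>" by (rule AE_E)
  have Nn: "N \<in> null_sets \<mu>" using N by auto
  have main: "emeasure \<mu> B \<le> ennreal (2 powr s * (A * L) / omega s) * hausdorff s (B - N)"
    if B: "B \<in> sets borel" for B
  proof (rule density_bound[OF sets s0 K0 B Nn])
    fix x assume x: "x \<in> B - N"
    show "\<exists>rx>0. \<forall>r. 0 < r \<and> r < rx \<longrightarrow> emeasure \<mu> (ball x r) \<le> ennreal (A * L * r powr s)"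
    proof (rule ccontr)
      assume "\<not> ?thesis"
      then have "x \<in> N" using N(1) sp by blast
      then show False using x by blast
    qed
  qed
  have eq: "2 powr s * (A * L) / omega s = 2 powr s * A / omega s * L" by simp
  show ?thesis
    using Nn main unfolding eq s_def[symmetric] L_def[symmetric] by blast
qed

end
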